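(* No finite subset of $T$ containing at least two points is full.
   Context: Let $X_1,X_2,X_3$ be pairwise disjoint nonempty sets and $\Omega=X_1\times X_2\times X_3$, with projections $\Pi_i:\Omega\to X_i$. A set $S\subset\Omega$ is good if every function $f:S\to\mathbb C$ can be written $f(w_1,w_2,w_3)=u_1(w_1)+u_2(w_2)+u_3(w_3)$ for all $(w_1,w_2,w_3)\in S$, for some functions $u_i:X_i\to\mathbb C$. A set $S$ is full if it is a maximal good subset of $\Pi_1S\times\Pi_2S\times\Pi_3S$. Construction: fix pairwise distinct elements $x_1,y_1,\alpha_{5k-4},\alpha_{5k-1}$ ($k\ge1$) of $X_1$; pairwise distinct elements $x_2,y_2,\alpha_{5k-3},\alpha_{5k}$ ($k\ge1$) of $X_2$; pairwise distinct elements $x_3,z_3,\alpha_{5k-2}$ ($k\ge1$) of $X_3$. Set the convention $\alpha_{-3}:=y_2$, $\alpha_{-2}:=z_3$. Define $a_1=(x_1,x_2,x_3)$, $a_2=(y_1,y_2,x_3)$, $a_3=(y_1,x_2,z_3)$ and for $n\ge1$: $a_{5n-1}=(\alpha_{5n-4},\alpha_{5n-3},\alpha_{5n-2})$, $a_{5n}=(\alpha_{5n-1},\alpha_{5n},\alpha_{5n-2})$, $a_{5n+1}=(\alpha_{5n-4},\alpha_{5n},\alpha_{5n-7})$, $a_{5n+2}=(\alpha_{5n-1},\alpha_{5n-3},x_3)$, $a_{5n+3}=(x_1,\alpha_{5n-8},\alpha_{5n-2})$. Let $T=\{a_i:i\ge1\}$. *)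

theory Defs
  imports Complex_Main
begin

text \<open>Elements of X1, X2, X3 all live in one type 'a; points of Omega are triples.\<close>

definition good :: "('a \<times> 'a \<times> 'a) set \<Rightarrow> bool" where
  "good S \<longleftrightarrow> (\<forall>f :: 'a \<times> 'a \<times> 'a \<Rightarrow> complex.
      \<exists>u1 u2 u3 :: 'a \<Rightarrow> complex.
        \<forall>w1 w2 w3. (w1, w2, w3) \<in> S \<longrightarrow> f (w1, w2, w3) = u1 w1 + u2 w2 + u3 w3)"

definition proj1 :: "('a \<times> 'a \<times> 'a) set \<Rightarrow> 'a set" where
  "proj1 S = (\<lambda>(w1, w2, w3). w1) ` S"
definition proj2 :: "('a \<times> 'a \<times> 'a) set \<Rightarrow> 'a set" where
  "proj2 S = (\<lambda>(w1, w2, w3). w2) ` S"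
definition proj3 :: "('a \<times> 'a \<times> 'a) set \<Rightarrow> 'a set" where
  "proj3 S = (\<lambda>(w1, w2, w3). w3) ` S"

definition full :: "('a \<times> 'a \<times> 'a) set \<Rightarrow> bool" where
  "full S \<longleftrightarrow> good S \<and>
     (\<forall>S'. S \<subseteq> S' \<and> S' \<subseteq> proj1 S \<times> proj2 S \<times> proj3 S \<and> good S' \<longrightarrow> S' = S)"

text \<open>The sequence a_i (i \<ge> 1, integer index); alpha is indexed by integers,
  with alpha(-3) = y2 and alpha(-2) = z3 imposed as hypotheses of the theorem.\<close>
definition seqT :: "'a \<Rightarrow> 'a \<Rightarrow> 'a \<Rightarrow> 'a \<Rightarrow> 'a \<Rightarrow> 'a \<Rightarrow> (int \<Rightarrow> 'a) \<Rightarrow> int \<Rightarrow> 'a \<times> 'a \<times> 'a" where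
  "seqT x1 y1 x2 y2 x3 z3 \<alpha> i =
    (if i = 1 then (x1, x2, x3)
     else if i = 2 then (y1, y2, x3)
     else if i = 3 then (y1, x2, z3)
     else (let n = (i + 1) div 5; r = (i + 1) mod 5 in
       if r = 0 then (\<alpha> (5*n-4), \<alpha> (5*n-3), \<alpha> (5*n-2))
       else if r = 1 then (\<alpha> (5*n-1), \<alpha> (5*n), \<alpha> (5*n-2))
       else if r = 2 then (\<alpha> (5*n-4), \<alpha> (5*n), \<alpha> (5*n-7))
       else if r = 3 then (\<alpha> (5*n-1), \<alpha> (5*n-3), x3)
       else (x1, \<alpha> (5*n-8), \<alpha> (5*n-2))))"

definition setT :: "'a \<Rightarrow> 'a \<Rightarrow> 'a \<Rightarrow> 'a \<Rightarrow> 'a \<Rightarrow> 'a \<Rightarrow> (int \<Rightarrow> 'a) \<Rightarrow> ('a \<times> 'a \<times> 'a) set" where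
  "setT x1 y1 x2 y2 x3 z3 \<alpha> = {seqT x1 y1 x2 y2 x3 z3 \<alpha> i | i. i \<ge> 1}"

end

theory Submission
  imports Defs
begin


lemma good_insert:
  fixes d1 d2 d3 :: "'a \<Rightarrow> complex"
  assumes g: "good S"
    and v: "\<And>w1 w2 w3. (w1,w2,w3) \<in> S \<Longrightarrow> d1 w1 + d2 w2 + d3 w3 = 0"
    and p: "d1 p1 + d2 p2 + d3 p3 \<noteq> 0"
  shows "good (insert (p1,p2,p3) S)"
  unfolding good_def
proof
  fix f :: "'a \<times> 'a \<times> 'a \<Rightarrow> complex"
  obtain u1 u2 u3 where u: "\<And>w1 w2 w3. (w1, w2, w3) \<in> S \<Longrightarrow> f (w1, w2, w3) = u1 w1 + u2 w2 + u3 w3"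
    using g unfolding good_def by blast
  define c where "c = (f (p1,p2,p3) - (u1 p1 + u2 p2 + u3 p3)) / (d1 p1 + d2 p2 + d3 p3)"
  have re: "(u1 a + c * d1 a) + (u2 b + c * d2 b) + (u3 e + c * d3 e) = (u1 a + u2 b + u3 e) + (c * (d1 a + d2 b + d3 e))" for a b e
    by algebra
  have "f (w1, w2, w3) = (\<lambda>x. u1 x + c * d1 x) w1 + (\<lambda>x. u2 x + c * d2 x) w2 + (\<lambda>x. u3 x + c * d3 x) w3"
    if "(w1,w2,w3) \<in> insert (p1,p2,p3) S" for w1 w2 w3
  proof (cases "(w1,w2,w3) \<in> S")
    case True
    show ?thesis unfolding re using u[OF True] v[OF True] by simp
  next
    case False
    then have e: "w1 = p1" "w2 = p2" "w3 = p3" using that by auto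
    have "c * (d1 p1 + d2 p2 + d3 p3) = f (p1,p2,p3) - (u1 p1 + u2 p2 + u3 p3)"
      using p unfolding c_def by simp
    then show ?thesis unfolding e re by simp
  qed
  then show "\<exists>u1 u2 u3. \<forall>w1 w2 w3. (w1, w2, w3) \<in> insert (p1, p2, p3) S \<longrightarrow> f (w1, w2, w3) = u1 w1 + u2 w2 + u3 w3"
    by (intro exI[of _ "\<lambda>x. u1 x + c * d1 x"] exI[of _ "\<lambda>x. u2 x + c * d2 x"] exI[of _ "\<lambda>x. u3 x + c * d3 x"] allI impI)
qed

lemma notfull:
  fixes d1 d2 d3 :: "'a \<Rightarrow> complex"
  assumes v: "\<And>w1 w2 w3. (w1,w2,w3) \<in> S \<Longrightarrow> d1 w1 + d2 w2 + d3 w3 = 0"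
    and q: "(a,b,c) \<in> S" and q': "(a',b',c') \<in> S"
    and d: "d1 a \<noteq> d1 a' \<or> d2 b \<noteq> d2 b' \<or> d3 c \<noteq> d3 c'"
  shows "\<not> full S"
proof
  assume F: "full S"
  have box: "(a1,b1,c1) \<in> proj1 S \<times> proj2 S \<times> proj3 S" if "a1 \<in> {a,a'}" "b1 \<in> {b,b'}" "c1 \<in> {c,c'}" for a1 b1 c1
  proof -
    have "a \<in> proj1 S" "a' \<in> proj1 S" "b \<in> proj2 S" "b' \<in> proj2 S" "c \<in> proj3 S" "c' \<in> proj3 S"
      unfolding proj1_def proj2_def proj3_def
      by (rule image_eqI[OF _ q] image_eqI[OF _ q'], simp)+
    then show ?thesis using that by auto
  qed
  have S_box: "S \<subseteq> proj1 S \<times> proj2 S \<times> proj3 S"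
  proof
    fix x assume "x \<in> S"
    then show "x \<in> proj1 S \<times> proj2 S \<times> proj3 S"
      unfolding proj1_def proj2_def proj3_def by (cases x) (auto intro: rev_image_eqI)
  qed
  have key: False if "a1 \<in> {a,a'}" "b1 \<in> {b,b'}" "c1 \<in> {c,c'}" "d1 a1 + d2 b1 + d3 c1 \<noteq> 0" for a1 b1 c1
  proof -
    have gS: "good S" using F unfolding full_def by blast
    have "good (insert (a1,b1,c1) S)" by (rule good_insert[of S d1 d2 d3 a1 b1 c1, OF gS v that(4)])
    moreover have "insert (a1,b1,c1) S \<subseteq> proj1 S \<times> proj2 S \<times> proj3 S" using box[OF that(1-3)] S_box by blast
    moreover have "\<forall>S'. S \<subseteq> S' \<and> S' \<subseteq> proj1 S \<times> proj2 S \<times> proj3 S \<and> good S' \<longrightarrow> S' = S"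
      using F unfolding full_def by blast
    ultimately have "insert (a1,b1,c1) S = S" by blast
    then have "(a1,b1,c1) \<in> S" by blast
    then show False using v that(4) by blast
  qed
  have z: "d1 a' + d2 b' + d3 c' = 0" using v q' .
  from d show False
  proof (elim disjE)
    assume "d1 a \<noteq> d1 a'"
    then have "d1 a + d2 b' + d3 c' \<noteq> 0" using z by (metis add_right_cancel add.assoc)
    then show False using key[of a b' c'] by auto
  next
    assume "d2 b \<noteq> d2 b'"
    then have "d1 a' + d2 b + d3 c' \<noteq> 0" using z by (metis add_right_cancel add_left_cancel)
    then show False using key[of a' b c'] by auto
  next
    assume "d3 c \<noteq> d3 c'"
    then have "d1 a' + d2 b' + d3 c \<noteq> 0" using z by (metis add_left_cancel)
    then show False using key[of a' b' c] by auto
  qed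
qed



locale T4 =
  fixes X1 X2 X3 :: "'a set" and x1 y1 x2 y2 x3 z3 :: 'a and \<alpha> :: "int \<Rightarrow> 'a"
  assumes ne: "X1 \<noteq> {}" "X2 \<noteq> {}" "X3 \<noteq> {}"
    and dj: "X1 \<inter> X2 = {}" "X1 \<inter> X3 = {}" "X2 \<inter> X3 = {}"
    and mem: "x1 \<in> X1" "y1 \<in> X1" "x2 \<in> X2" "y2 \<in> X2" "x3 \<in> X3" "z3 \<in> X3"
    and amem: "\<And>k. k \<ge> 1 \<Longrightarrow> \<alpha> (5*k-4) \<in> X1 \<and> \<alpha> (5*k-1) \<in> X1 \<and> \<alpha> (5*k-3) \<in> X2
                        \<and> \<alpha> (5*k) \<in> X2 \<and> \<alpha> (5*k-2) \<in> X3"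
    and dx: "x1 \<noteq> y1" "x2 \<noteq> y2" "x3 \<noteq> z3"
    and inj: "inj_on \<alpha> {1..}"
    and anx: "\<And>i. i \<ge> 1 \<Longrightarrow> \<alpha> i \<notin> {x1, y1, x2, y2, x3, z3}"
    and am3: "\<alpha> (-3) = y2" and am2: "\<alpha> (-2) = z3"
begin

definition "D = {i::int. 1 \<le> i \<or> i = -3 \<or> i = -2}"

lemma y2z3: "y2 \<noteq> z3" using dj mem by blast

lemma aeq: "i \<in> D \<Longrightarrow> j \<in> D \<Longrightarrow> (\<alpha> i = \<alpha> j) = (i = j)"
  unfolding D_def using inj anx am3 am2 y2z3
  by (auto simp: inj_on_def) (metis insert_iff)+

lemma ax: "i \<in> D \<Longrightarrow> \<alpha> i \<noteq> x1 \<and> \<alpha> i \<noteq> y1 \<and> \<alpha> i \<noteq> x2 \<and> \<alpha> i \<noteq> x3"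
  unfolding D_def using anx am3 am2 dj mem dx by auto

lemma ax1: "1 \<le> i \<Longrightarrow> \<alpha> i \<noteq> x1 \<and> \<alpha> i \<noteq> y1 \<and> \<alpha> i \<noteq> x2 \<and> \<alpha> i \<noteq> y2 \<and> \<alpha> i \<noteq> x3 \<and> \<alpha> i \<noteq> z3"
  using anx by auto

definition "P m = (\<alpha>(5*m-4), \<alpha>(5*m-3), \<alpha>(5*m-2))"
definition "Q m = (\<alpha>(5*m-1), \<alpha>(5*m), \<alpha>(5*m-2))"
definition "R m = (\<alpha>(5*m-4), \<alpha>(5*m), \<alpha>(5*m-7))"
definition "U m = (\<alpha>(5*m-1), \<alpha>(5*m-3), x3)"
definition "V m = (x1, \<alpha>(5*m-8), \<alpha>(5*m-2))"

lemma setT_elim: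
  assumes "s \<in> setT x1 y1 x2 y2 x3 z3 \<alpha>"
  shows "s = (x1,x2,x3) \<or> s = (y1,y2,x3) \<or> s = (y1,x2,z3) \<or>
    (\<exists>m\<ge>1. s = P m \<or> s = Q m \<or> s = R m \<or> s = U m \<or> s = V m)"
proof -
  obtain i where i: "i \<ge> 1" "s = seqT x1 y1 x2 y2 x3 z3 \<alpha> i" using assms unfolding setT_def by blast
  show ?thesis
  proof (cases "i \<le> 3")
    case True
    then have "i = 1 \<or> i = 2 \<or> i = 3" using i by auto
    then show ?thesis using i unfolding seqT_def by auto
  next
    case False
    define n where "n = (i+1) div 5"
    define r where "r = (i+1) mod 5"
    have n1: "n \<ge> 1" using False unfolding n_def by auto
    have ir: "i = 5*n + r - 1" "0 \<le> r" "r < 5" unfolding n_def r_def by auto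
    have "r = 0 \<or> r = 1 \<or> r = 2 \<or> r = 3 \<or> r = 4" using ir by auto
    then have "s = P n \<or> s = Q n \<or> s = R n \<or> s = U n \<or> s = V n"
      using i False unfolding seqT_def P_def Q_def R_def U_def V_def Let_def n_def[symmetric] r_def[symmetric]
      by (elim disjE) (simp_all add: ir(1) algebra_simps)
    then show ?thesis using n1 by blast
  qed
qed

end

context T4 begin
lemma Dm: "1 \<le> m \<Longrightarrow> 5*m-4 \<in> D" "1 \<le> m \<Longrightarrow> 5*m-3 \<in> D" "1 \<le> m \<Longrightarrow> 5*m-2 \<in> D"
  "1 \<le> m \<Longrightarrow> 5*m-1 \<in> D" "1 \<le> m \<Longrightarrow> 5*m \<in> D" "1 \<le> m \<Longrightarrow> 5*m-7 \<in> D"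
  "1 \<le> m \<Longrightarrow> 5*m-8 \<in> D" "1 \<le> m \<Longrightarrow> 5*m+3 \<in> D"
  unfolding D_def by auto

definition "e1 n v = (if v = \<alpha>(5*n-4) then 1 else 0) + (if v = \<alpha>(5*n-1) then 1 else (0::complex))"
definition "e2 n v = - (if v = \<alpha>(5*n-3) then 1 else 0) - (if v = \<alpha>(5*n) then 1 else (0::complex))"
definition "e3 n v = (if v = \<alpha>(5*n+3) then 1 else (0::complex))"
definition "es n w = e1 n (fst w) + e2 n (fst (snd w)) + e3 n (snd (snd w))"

lemma ax1s: "1 \<le> i \<Longrightarrow> x1 \<noteq> \<alpha> i \<and> y1 \<noteq> \<alpha> i \<and> x2 \<noteq> \<alpha> i \<and> y2 \<noteq> \<alpha> i \<and> x3 \<noteq> \<alpha> i \<and> z3 \<noteq> \<alpha> i"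
  using ax1 by metis

lemmas edefs = es_def e1_def e2_def e3_def P_def Q_def R_def U_def V_def

lemma esP: "1 \<le> m \<Longrightarrow> 1 \<le> n \<Longrightarrow> es n (P m) = (if m = n+1 then 1 else 0)"
  unfolding edefs by (auto simp: aeq Dm ax1 ax1s; presburger)
lemma esQ: "1 \<le> m \<Longrightarrow> 1 \<le> n \<Longrightarrow> es n (Q m) = (if m = n+1 then 1 else 0)"
  unfolding edefs by (auto simp: aeq Dm ax1 ax1s; presburger)
lemma esR: "1 \<le> m \<Longrightarrow> 1 \<le> n \<Longrightarrow> es n (R m) = (if m = n+2 then 1 else 0)"
  unfolding edefs by (auto simp: aeq Dm ax1 ax1s; presburger)
lemma esU: "1 \<le> m \<Longrightarrow> 1 \<le> n \<Longrightarrow> es n (U m) = 0"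
  unfolding edefs by (auto simp: aeq Dm ax1 ax1s; presburger)
lemma esV: "1 \<le> m \<Longrightarrow> 1 \<le> n \<Longrightarrow> es n (V m) = 0"
  unfolding edefs by (auto simp: aeq Dm ax1 ax1s; presburger)
lemma esa: "1 \<le> n \<Longrightarrow> es n (x1,x2,x3) = 0" "1 \<le> n \<Longrightarrow> es n (y1,y2,x3) = 0" "1 \<le> n \<Longrightarrow> es n (y1,x2,z3) = 0"
  unfolding edefs by (simp_all add: aeq Dm ax1 ax1s)
end

context T4 begin

definition "vs d1 d2 d3 w = d1 (fst w) + d2 (fst (snd w)) + d3 (snd (snd w))"

lemma notfull2:
  fixes d1 d2 d3 :: "'a \<Rightarrow> complex"
  assumes "\<forall>w\<in>S. vs d1 d2 d3 w = 0" "q \<in> S" "q' \<in> S"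
    "d1 (fst q) \<noteq> d1 (fst q') \<or> d2 (fst (snd q)) \<noteq> d2 (fst (snd q')) \<or> d3 (snd (snd q)) \<noteq> d3 (snd (snd q'))"
  shows "\<not> full S"
proof -
  obtain a b c where q: "q = (a,b,c)" by (cases q) auto
  obtain a' b' c' where q': "q' = (a',b',c')" by (cases q') auto
  show ?thesis
    by (rule notfull[of S d1 d2 d3 a b c a' b' c']) (use assms q q' in \<open>auto simp: vs_def\<close>)
qed

lemma es_vs: "es n = vs (e1 n) (e2 n) (e3 n)"
  unfolding es_def vs_def by auto

lemma e1P: "1 \<le> m \<Longrightarrow> 1 \<le> n \<Longrightarrow> e1 n (fst (P m)) = (if m = n then 1 else 0)"
  unfolding edefs by (auto simp: aeq Dm ax1 ax1s; presburger)
lemma e1Q: "1 \<le> m \<Longrightarrow> 1 \<le> n \<Longrightarrow> e1 n (fst (Q m)) = (if m = n then 1 else 0)"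
  unfolding edefs by (auto simp: aeq Dm ax1 ax1s; presburger)
lemma e1R: "1 \<le> m \<Longrightarrow> 1 \<le> n \<Longrightarrow> e1 n (fst (R m)) = (if m = n then 1 else 0)"
  unfolding edefs by (auto simp: aeq Dm ax1 ax1s; presburger)
lemma e1U: "1 \<le> m \<Longrightarrow> 1 \<le> n \<Longrightarrow> e1 n (fst (U m)) = (if m = n then 1 else 0)"
  unfolding edefs by (auto simp: aeq Dm ax1 ax1s; presburger)
lemma e1V: "1 \<le> m \<Longrightarrow> 1 \<le> n \<Longrightarrow> e1 n (fst (V m)) = 0"
  unfolding edefs by (auto simp: aeq Dm ax1 ax1s; presburger)
lemma e1a: "1 \<le> n \<Longrightarrow> e1 n x1 = 0" "1 \<le> n \<Longrightarrow> e1 n y1 = 0"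
  unfolding edefs by (auto simp: aeq Dm ax1 ax1s)

lemma mainL:
  assumes fin: "finite S" and sub: "S \<subseteq> setT x1 y1 x2 y2 x3 z3 \<alpha>" and c2: "2 \<le> card S"
  shows "\<not> full S"
proof -
  obtain q q' where qq: "q\<in>S" "q'\<in>S" "q\<noteq>q'" using c2 card_le_Suc0_iff_eq[OF fin] by force
  have el: "\<And>s. s\<in>S \<Longrightarrow> s = (x1,x2,x3) \<or> s = (y1,y2,x3) \<or> s = (y1,x2,z3) \<or>
    (\<exists>m\<ge>1. s = P m \<or> s = Q m \<or> s = R m \<or> s = U m \<or> s = V m)" using setT_elim sub by blast
  show ?thesis
  proof (cases "\<exists>m\<ge>1. P m \<in> S \<or> Q m \<in> S \<or> R m \<in> S \<or> U m \<in> S")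
    case True
    define M where "M = {m. 1 \<le> m \<and> (P m \<in> S \<or> Q m \<in> S \<or> R m \<in> S \<or> U m \<in> S)}"
    have "M \<subseteq> ((\<lambda>m. \<alpha>(5*m-4)) -` (fst ` S) \<inter> {1..}) \<union> ((\<lambda>m. \<alpha>(5*m-1)) -` (fst ` S) \<inter> {1..})"
      unfolding M_def P_def Q_def R_def U_def by force
    moreover have "inj_on (\<lambda>m. \<alpha>(5*m-4)) {1..}" "inj_on (\<lambda>m. \<alpha>(5*m-1)) {1..}"
      by (auto simp: inj_on_def aeq Dm)
    ultimately have finM: "finite M" using fin
      by (meson finite_Un finite_imageI finite_vimage_IntI finite_subset)
    have "M \<noteq> {}" using True M_def by auto
    define n where "n = Max M"
    have nM: "n \<in> M" and nmax: "\<And>m. m\<in>M \<Longrightarrow> m \<le> n" using finM \<open>M\<noteq>{}\<close> n_def by auto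
    have n1: "1 \<le> n" using nM M_def by auto
    show ?thesis
    proof (cases "S \<subseteq> {P n, Q n, R n, U n}")
      case True
      define f1 where "f1 = (\<lambda>v. if v = \<alpha>(5*n-1) then 1 else (0::complex))"
      define f2 where "f2 = (\<lambda>v. - (if v = \<alpha>(5*n) then 1 else (0::complex)))"
      define f3 where "f3 = (\<lambda>v. (if v = \<alpha>(5*n-7) then 1 else 0) - (if v = x3 then 1 else (0::complex)))"
      have x3n: "\<alpha>(5*n-7) \<noteq> x3" "\<alpha>(5*n-2) \<noteq> x3" using ax Dm n1 by blast+
      have fP: "f1 (fst (P n)) = 0" "f2 (fst (snd (P n))) = 0" "f3 (snd (snd (P n))) = 0"
        unfolding f1_def f2_def f3_def P_def using n1 x3n by (auto simp: aeq Dm)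
      have fQ: "f1 (fst (Q n)) = 1" "f2 (fst (snd (Q n))) = -1" "f3 (snd (snd (Q n))) = 0"
        unfolding f1_def f2_def f3_def Q_def using n1 x3n by (auto simp: aeq Dm)
      have fR: "f1 (fst (R n)) = 0" "f2 (fst (snd (R n))) = -1" "f3 (snd (snd (R n))) = 1"
        unfolding f1_def f2_def f3_def R_def using n1 x3n by (auto simp: aeq Dm)
      have fU: "f1 (fst (U n)) = 1" "f2 (fst (snd (U n))) = 0" "f3 (snd (snd (U n))) = -1"
        unfolding f1_def f2_def f3_def U_def using n1 x3n by (auto simp: aeq Dm)
      have van: "\<forall>w\<in>S. vs f1 f2 f3 w = 0"
      proof
        fix w assume "w \<in> S"
        then have "w = P n \<or> w = Q n \<or> w = R n \<or> w = U n" using True by blast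
        then show "vs f1 f2 f3 w = 0"
          by (elim disjE) (simp_all add: vs_def fP fQ fR fU)
      qed
      have "q = P n \<or> q = Q n \<or> q = R n \<or> q = U n" "q' = P n \<or> q' = Q n \<or> q' = R n \<or> q' = U n"
        using True qq by blast+
      then have "f1 (fst q) \<noteq> f1 (fst q') \<or> f2 (fst (snd q)) \<noteq> f2 (fst (snd q')) \<or> f3 (snd (snd q)) \<noteq> f3 (snd (snd q'))"
        using qq(3) by (elim disjE; simp add: fP fQ fR fU)
      then show ?thesis using notfull2 van qq by blast
    next
      case False
      then obtain s' where s': "s' \<in> S" "s' \<notin> {P n, Q n, R n, U n}" by blast
      obtain q0 where q0: "q0 \<in> S" "q0 \<in> {P n, Q n, R n, U n}" using nM unfolding M_def by blast
      have van: "\<forall>w\<in>S. es n w = 0"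
      proof
        fix w assume w: "w \<in> S"
        from el[OF w] show "es n w = 0"
        proof (elim disjE exE conjE)
          fix m assume m: "1 \<le> m" and "w = P m"
          then have "m \<le> n" using nmax M_def w by auto
          then show ?thesis using esP[OF m n1] \<open>w = P m\<close> by auto
        next
          fix m assume m: "1 \<le> m" and "w = Q m"
          then have "m \<le> n" using nmax M_def w by auto
          then show ?thesis using esQ[OF m n1] \<open>w = Q m\<close> by auto
        next
          fix m assume m: "1 \<le> m" and "w = R m"
          then have "m \<le> n" using nmax M_def w by auto
          then show ?thesis using esR[OF m n1] \<open>w = R m\<close> by auto
        next
          fix m assume m: "1 \<le> m" and "w = U m"
          then show ?thesis using esU[OF m n1] by auto
        next
          fix m assume m: "1 \<le> m" and "w = V m"
          then show ?thesis using esV[OF m n1] by auto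
        qed (use esa n1 in auto)
      qed
      have e1q0: "e1 n (fst q0) = 1"
        using q0(2) e1P[OF n1 n1] e1Q[OF n1 n1] e1R[OF n1 n1] e1U[OF n1 n1] by auto
      have e1s: "e1 n (fst s') = 0"
        using el[OF s'(1)]
      proof (elim disjE exE conjE)
        fix m assume m: "1 \<le> m" "s' = P m" then have "m \<noteq> n" using s'(2) by auto
        then show ?thesis using e1P[OF m(1) n1] m(2) by simp
      next
        fix m assume m: "1 \<le> m" "s' = Q m" then have "m \<noteq> n" using s'(2) by auto
        then show ?thesis using e1Q[OF m(1) n1] m(2) by simp
      next
        fix m assume m: "1 \<le> m" "s' = R m" then have "m \<noteq> n" using s'(2) by auto
        then show ?thesis using e1R[OF m(1) n1] m(2) by simp
      next
        fix m assume m: "1 \<le> m" "s' = U m" then have "m \<noteq> n" using s'(2) by auto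
        then show ?thesis using e1U[OF m(1) n1] m(2) by simp
      next
        fix m assume m: "1 \<le> m" "s' = V m"
        then show ?thesis using e1V[OF m(1) n1] by simp
      qed (use e1a[OF n1] in simp_all)
      have van': "\<forall>w\<in>S. vs (e1 n) (e2 n) (e3 n) w = 0" using van by (simp add: es_vs)
      show ?thesis
        by (rule notfull2[of S "e1 n" "e2 n" "e3 n" q0 s']) (use van' q0(1) s'(1) e1q0 e1s in simp_all)
    qed
  next
    case False
    then have el2: "\<And>s. s\<in>S \<Longrightarrow> s = (x1,x2,x3) \<or> s = (y1,y2,x3) \<or> s = (y1,x2,z3) \<or> (\<exists>m\<ge>1. s = V m)"
      using el by metis
    show ?thesis
    proof (cases "\<exists>m\<ge>2. V m \<in> S")
      case True
      define K where "K = {m. 2 \<le> m \<and> V m \<in> S}"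
      have "K \<subseteq> ((\<lambda>m. \<alpha>(5*m-2)) -` ((\<lambda>w. snd (snd w)) ` S) \<inter> {1..})"
        unfolding K_def V_def by force
      moreover have "inj_on (\<lambda>m. \<alpha>(5*m-2)) {1..}"
        by (auto simp: inj_on_def aeq Dm)
      ultimately have finK: "finite K" using fin
        by (meson finite_imageI finite_vimage_IntI finite_subset)
      have "K \<noteq> {}" using True K_def by auto
      define k where "k = Max K"
      have kK: "k \<in> K" and kmax: "\<And>m. m\<in>K \<Longrightarrow> m \<le> k" using finK \<open>K\<noteq>{}\<close> k_def by auto
      have k2: "2 \<le> k" and Vk: "V k \<in> S" using kK K_def by auto
      have k1: "1 \<le> 5*k-8" using k2 by auto
      define g1 where "g1 = (\<lambda>v::'a. 0::complex)"
      define g2 where "g2 = (\<lambda>v. if v = \<alpha>(5*k-8) then 1 else (0::complex))"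
      define g3 where "g3 = (\<lambda>v. - (if v = \<alpha>(5*k-2) then 1 else (0::complex)))"
      have gV: "g2 (fst (snd (V m))) = (if m = k then 1 else 0)" "g3 (snd (snd (V m))) = - (if m = k then 1 else 0)"
        if "1 \<le> m" for m
        unfolding g2_def g3_def V_def using that k2 by (auto simp: aeq Dm)
      have ga: "g2 x2 = 0" "g2 y2 = 0" "g3 x3 = 0" "g3 z3 = 0"
        unfolding g2_def g3_def using ax1s[OF k1] ax1s[of "5*k-2"] k2 by auto
      have van: "\<forall>w\<in>S. vs g1 g2 g3 w = 0"
      proof
        fix w assume w: "w \<in> S"
        from el2[OF w] show "vs g1 g2 g3 w = 0"
        proof (elim disjE exE conjE)
          fix m assume m: "1 \<le> m" and "w = V m"
          then show ?thesis using gV[OF m] unfolding vs_def g1_def by auto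
        qed (use ga in \<open>auto simp: vs_def g1_def\<close>)
      qed
      obtain s' where s': "s' \<in> S" "s' \<noteq> V k" using qq by metis
      have "g2 (fst (snd s')) = 0"
        using el2[OF s'(1)] s'(2) gV ga by auto
      moreover have "g2 (fst (snd (V k))) = 1" using gV k2 by auto
      ultimately show ?thesis using notfull2[of S g1 g2 g3 "V k" s'] van Vk s' by auto
    next
      case False
      then have el3: "\<And>s. s\<in>S \<Longrightarrow> s = (x1,x2,x3) \<or> s = (y1,y2,x3) \<or> s = (y1,x2,z3) \<or> s = (x1,y2,\<alpha> 3)"
        using el2 unfolding V_def by (smt (verit) am3)
      define h1 where "h1 = (\<lambda>v. if v = y1 then 1 else (0::complex))"
      define h2 where "h2 = (\<lambda>v. - (if v = y2 then 1 else (0::complex)))"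
      define h3 where "h3 = (\<lambda>v. (if v = \<alpha> 3 then 1 else 0) - (if v = z3 then 1 else (0::complex)))"
      have d: "\<alpha> 3 \<noteq> z3" "\<alpha> 3 \<noteq> x3" using ax1[of 3] by auto
      have ne: "y1 \<noteq> x1" "y2 \<noteq> x2" "z3 \<noteq> x3" "z3 \<noteq> \<alpha> 3" "x3 \<noteq> \<alpha> 3" using dx d by auto
      have hv: "h1 x1 = 0" "h1 y1 = 1" "h2 x2 = 0" "h2 y2 = -1" "h3 x3 = 0" "h3 z3 = -1" "h3 (\<alpha> 3) = 1"
        unfolding h1_def h2_def h3_def using ne dx d by simp_all
      have van: "\<forall>w\<in>S. vs h1 h2 h3 w = 0"
      proof
        fix w assume "w \<in> S"
        from el3[OF this] show "vs h1 h2 h3 w = 0"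
          by (elim disjE) (simp_all add: vs_def hv)
      qed
      have "h1 (fst q) \<noteq> h1 (fst q') \<or> h2 (fst (snd q)) \<noteq> h2 (fst (snd q')) \<or> h3 (snd (snd q)) \<noteq> h3 (snd (snd q'))"
        using el3[OF qq(1)] el3[OF qq(2)] qq(3) by (elim disjE; simp add: hv)
      then show ?thesis using notfull2 van qq by blast
    qed
  qed
qed

end

theorem mainTheorem4:
  fixes X1 X2 X3 :: "'a set" and x1 y1 x2 y2 x3 z3 :: 'a and \<alpha> :: "int \<Rightarrow> 'a"
  assumes "X1 \<noteq> {}" "X2 \<noteq> {}" "X3 \<noteq> {}"
    and "X1 \<inter> X2 = {}" "X1 \<inter> X3 = {}" "X2 \<inter> X3 = {}"
    and "x1 \<in> X1" "y1 \<in> X1" "x2 \<in> X2" "y2 \<in> X2" "x3 \<in> X3" "z3 \<in> X3"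
    and "\<And>k. k \<ge> 1 \<Longrightarrow> \<alpha> (5*k-4) \<in> X1 \<and> \<alpha> (5*k-1) \<in> X1 \<and> \<alpha> (5*k-3) \<in> X2
                        \<and> \<alpha> (5*k) \<in> X2 \<and> \<alpha> (5*k-2) \<in> X3"
    and "x1 \<noteq> y1" "x2 \<noteq> y2" "x3 \<noteq> z3"
    and "inj_on \<alpha> {1..}"
    and "\<And>i. i \<ge> 1 \<Longrightarrow> \<alpha> i \<notin> {x1, y1, x2, y2, x3, z3}"
    and "\<alpha> (-3) = y2" "\<alpha> (-2) = z3"
  shows "\<forall>S. finite S \<and> S \<subseteq> setT x1 y1 x2 y2 x3 z3 \<alpha> \<and> card S \<ge> 2 \<longrightarrow> \<not> full S"
proof (intro allI impI)
  fix S assume h: "finite S \<and> S \<subseteq> setT x1 y1 x2 y2 x3 z3 \<alpha> \<and> card S \<ge> 2"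
  interpret T4 X1 X2 X3 x1 y1 x2 y2 x3 z3 \<alpha>
    by (unfold_locales) (use assms in auto)
  show "\<not> full S" using mainL h by blast
qed

end
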